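(* Let $k\ge3$ be odd and let $G$ be a connected $k$-uniform hypergraph (with at least one edge). Then $0$ is not an eigenvalue of the signless Laplacian tensor $\mathcal D+\mathcal A$ of $G$.
   Context: A $k$-uniform hypergraph $G=(V,E)$ has vertex set $V=[n]$ ($n\ge k$) and edge set $E$ of $k$-element subsets; $d_i$ is the number of edges containing $i$. $G$ is connected if any two distinct vertices are joined by a sequence of edges with consecutive edges intersecting. The adjacency tensor $\mathcal A$ has $a_{i_1\dots i_k}=\frac1{(k-1)!}$ if $\{i_1,\dots,i_k\}\in E$, else $0$; $\mathcal D$ is diagonal with $d_{i\dots i}=d_i$. $\lambda\in\mathbb C$ is an eigenvalue of a tensor $\mathcal T$ if there is $\mathbf x\in\mathbb C^n\setminus\{0\}$ with $\sum_{i_2,\dots,i_k}t_{ii_2\dots i_k}x_{i_2}\cdots x_{i_k}=\lambda x_i^{k-1}$ for all $i\in[n]$. *)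

theory Defs
  imports Complex_Main
begin

definition uniform_hypergraph :: "nat \<Rightarrow> nat \<Rightarrow> nat set set \<Rightarrow> bool" where
  "uniform_hypergraph n k E \<longleftrightarrow> n \<ge> k \<and> (\<forall>e\<in>E. e \<subseteq> {1..n} \<and> card e = k)"

definition hdegree :: "nat set set \<Rightarrow> nat \<Rightarrow> nat" where
  "hdegree E i = card {e\<in>E. i \<in> e}"

definition hconnected :: "nat \<Rightarrow> nat set set \<Rightarrow> bool" where
  "hconnected n E \<longleftrightarrow>
     (\<forall>i\<in>{1..n}. \<forall>j\<in>{1..n}. i \<noteq> j \<longrightarrow>
        (\<exists>es. es \<noteq> [] \<and> set es \<subseteq> E \<and> i \<in> hd es \<and> j \<in> last es \<and>
              (\<forall>t. Suc t < length es \<longrightarrow> es ! t \<inter> es ! Suc t \<noteq> {})))"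

text \<open>Order-k tensors of dimension n are functions on index lists (entries used only for
  lists of length k with entries in [n]).\<close>
type_synonym tensor = "nat list \<Rightarrow> complex"

definition adjacency_tensor :: "nat \<Rightarrow> nat set set \<Rightarrow> tensor" where
  "adjacency_tensor k E idx = (if set idx \<in> E then 1 / of_nat (fact (k - 1)) else 0)"

definition degree_tensor :: "nat set set \<Rightarrow> tensor" where
  "degree_tensor E idx = (if idx \<noteq> [] \<and> (\<forall>j\<in>set idx. j = hd idx)
                           then of_nat (hdegree E (hd idx)) else 0)"

definition signless_laplacian :: "nat \<Rightarrow> nat set set \<Rightarrow> tensor" where
  "signless_laplacian k E idx = degree_tensor E idx + adjacency_tensor k E idx"

definition tensor_eigenvalue :: "nat \<Rightarrow> nat \<Rightarrow> tensor \<Rightarrow> complex \<Rightarrow> bool" where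
  "tensor_eigenvalue n k T lam \<longleftrightarrow>
     (\<exists>x :: nat \<Rightarrow> complex. (\<exists>i\<in>{1..n}. x i \<noteq> 0) \<and>
        (\<forall>i\<in>{1..n}.
           (\<Sum>js\<in>{js. length js = k - 1 \<and> set js \<subseteq> {1..n}}.
               T (i # js) * prod_list (map x js)) = lam * x i ^ (k - 1)))"

end

theory Submission imports Defs "HOL-Combinatorics.Multiset_Permutations" begin

lemma prod_list_le_pow:
  fixes a :: "real list"
  assumes "\<forall>v\<in>set a. 0 \<le> v \<and> v \<le> M"
  shows "prod_list a \<le> M ^ length a \<and> 0 \<le> prod_list a"
  using assms
proof (induction a)
  case Nil then show ?case by simp
next
  case (Cons v a)
  then have h: "prod_list a \<le> M ^ length a" "0 \<le> prod_list a" "0 \<le> v" "v \<le> M" by auto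
  then show ?case by (simp add: mult_mono)
qed

lemma prod_list_eq_max:
  fixes a :: "real list"
  assumes "\<forall>v\<in>set a. 0 \<le> v \<and> v \<le> M" "prod_list a = M ^ length a" "M > 0"
  shows "\<forall>v\<in>set a. v = M"
  using assms
proof (induction a)
  case Nil then show ?case by simp
next
  case (Cons v a)
  then have h: "prod_list a \<le> M ^ length a" "0 \<le> prod_list a" "0 \<le> v" "v \<le> M"
    using prod_list_le_pow[of a M] by auto
  have e: "v * prod_list a = M * M ^ length a" using Cons.prems by simp
  have Mp: "M ^ length a > 0" using \<open>M>0\<close> by simp
  have v: "v = M"
  proof (rule ccontr)
    assume "v \<noteq> M" then have "v < M" using h by simp
    have "v * prod_list a \<le> v * M ^ length a" using h by (simp add: mult_left_mono)
    also have "\<dots> < M * M ^ length a" using \<open>v<M\<close> Mp by simp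
    finally show False using e by simp
  qed
  then have "prod_list a = M ^ length a" using e \<open>M>0\<close> by simp
  then show ?case using Cons v by auto
qed

lemma key:
  fixes x :: "nat \<Rightarrow> complex" and A :: "nat list set"
  assumes fin: "finite A" and ne: "A \<noteq> {}" and M: "M > 0"
    and hM: "\<forall>js\<in>A. \<forall>j\<in>set js. norm (x j) \<le> M"
    and len: "\<forall>js\<in>A. length js = m"
    and hw: "norm w = M ^ m"
    and hsum: "(\<Sum>js\<in>A. prod_list (map x js)) = - of_nat (card A) * w"
  shows "\<forall>js\<in>A. prod_list (map x js) = - w \<and> (\<forall>j\<in>set js. norm (x j) = M)"
proof
  fix js assume js: "js \<in> A"
  define R where "R = M ^ m * M ^ m"
  define z where "z = (\<lambda>js. prod_list (map x js) * cnj (- w))"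
  have nz: "norm (prod_list (map x l)) = prod_list (map (\<lambda>j. norm (x j)) l)" for l
    by (induction l) (auto simp: norm_mult)
  have bnd: "norm (prod_list (map x l)) \<le> M ^ m" if "l \<in> A" for l
  proof -
    have "prod_list (map (\<lambda>j. norm (x j)) l) \<le> M ^ length (map (\<lambda>j. norm (x j)) l)"
      using prod_list_le_pow[of "map (\<lambda>j. norm (x j)) l" M] hM that by auto
    then show ?thesis using nz len that by simp
  qed
  have zle: "Re (z l) \<le> R" if "l \<in> A" for l
  proof -
    have "Re (z l) \<le> norm (z l)" by (rule complex_Re_le_cmod)
    also have "\<dots> = norm (prod_list (map x l)) * M ^ m" by (simp add: z_def norm_mult hw)
    also have "\<dots> \<le> M ^ m * M ^ m" using bnd[OF that] M by (simp add: mult_right_mono)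
    finally show ?thesis by (simp add: R_def)
  qed
  have s1: "(\<Sum>l\<in>A. z l) = (\<Sum>l\<in>A. prod_list (map x l)) * cnj (- w)"
    unfolding z_def by (rule sum_distrib_right[symmetric])
  have s2: "(\<Sum>l\<in>A. prod_list (map x l)) * cnj (- w) = of_nat (card A) * (w * cnj w)"
    unfolding hsum by simp
  have s3: "w * cnj w = of_real ((norm w)^2)" by (rule complex_norm_square[symmetric])
  have s4: "(norm w)^2 = R" using hw by (simp only: R_def power2_eq_square)
  have "(\<Sum>l\<in>A. z l) = of_real (real (card A) * R)" using s1 s2 s3 s4 by simp
  then have "(\<Sum>l\<in>A. Re (z l)) = real (card A) * R" by (metis Re_complex_of_real Re_sum)
  also have "\<dots> = (\<Sum>l\<in>A. R)" by simp
  finally have h0: "(\<Sum>l\<in>A. R - Re (z l)) = 0" by (simp add: sum_subtractf)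
  have nn: "\<And>l. l\<in>A \<Longrightarrow> 0 \<le> R - Re (z l)" using zle by simp
  have "\<forall>l\<in>A. R - Re (z l) = 0"
    using iffD1[OF sum_nonneg_eq_0_iff[OF fin nn] h0] .
  then have Rz: "Re (z js) = R" using js by simp
  have "Re (z js) \<le> norm (z js)" by (rule complex_Re_le_cmod)
  moreover have nzjs: "norm (z js) = norm (prod_list (map x js)) * M ^ m" by (simp add: z_def norm_mult hw)
  ultimately have "R \<le> norm (prod_list (map x js)) * M ^ m" using Rz by simp
  moreover have "M ^ m > 0" using M by simp
  ultimately have "M ^ m \<le> norm (prod_list (map x js))"
    unfolding R_def by (rule mult_right_le_imp_le)
  then have np: "norm (prod_list (map x js)) = M ^ m"
    using bnd[OF js] by simp
  have "norm (z js) = R" using nzjs np R_def by simp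
  then have "(Im (z js))^2 = 0"
  proof -
    have "(norm (z js))^2 = (Re (z js))^2 + (Im (z js))^2" by (rule cmod_power2)
    then show ?thesis using Rz \<open>norm (z js) = R\<close> by simp
  qed
  then have "z js = of_real R" using Rz by (simp add: complex_eq_iff)
  also have "of_real R = (- w) * cnj (- w)"
  proof -
    have "(- w) * cnj (- w) = of_real ((norm (-w))^2)" by (rule complex_norm_square[symmetric])
    also have "(norm (-w))^2 = R" using hw by (simp only: norm_minus_cancel R_def power2_eq_square)
    finally show ?thesis by simp
  qed
  finally have "prod_list (map x js) * cnj (- w) = (- w) * cnj (- w)" by (simp add: z_def)
  moreover have "cnj (- w) \<noteq> 0" using hw M by auto
  ultimately have p: "prod_list (map x js) = - w" using mult_right_cancel by blast
  have "prod_list (map (\<lambda>j. norm (x j)) js) = M ^ length (map (\<lambda>j. norm (x j)) js)"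
    using np nz len js by simp
  then have "\<forall>v\<in>set (map (\<lambda>j. norm (x j)) js). v = M"
    using prod_list_eq_max[of "map (\<lambda>j. norm (x j)) js" M] hM js M by auto
  then show "prod_list (map x js) = - w \<and> (\<forall>j\<in>set js. norm (x j) = M)" using p by simp
qed

lemma deg_part:
  fixes x :: "nat \<Rightarrow> complex"
  assumes i: "i \<in> {1..n}"
  shows "(\<Sum>js\<in>{js. length js = m \<and> set js \<subseteq> {1..n}}. degree_tensor E (i # js) * prod_list (map x js))
         = of_nat (hdegree E i) * x i ^ m"
proof -
  let ?L = "{js. length js = m \<and> set js \<subseteq> {1..n}}"
  have fin: "finite ?L" using finite_lists_length_eq[of "{1..n}" m] by (simp add: conj_commute)
  have "(\<Sum>js\<in>?L. degree_tensor E (i # js) * prod_list (map x js))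
      = (\<Sum>js\<in>?L. if (\<forall>j\<in>set js. j = i) then of_nat (hdegree E i) * prod_list (map x js) else 0)"
    by (rule sum.cong) (auto simp: degree_tensor_def)
  also have "\<dots> = (\<Sum>js\<in>{js\<in>?L. \<forall>j\<in>set js. j = i}. of_nat (hdegree E i) * prod_list (map x js))"
    by (rule sum.inter_filter[OF fin, symmetric])
  also have "{js\<in>?L. \<forall>j\<in>set js. j = i} = {replicate m i}"
  proof
    show "{js\<in>?L. \<forall>j\<in>set js. j = i} \<subseteq> {replicate m i}"
      by (auto simp: replicate_length_same)
    show "{replicate m i} \<subseteq> {js\<in>?L. \<forall>j\<in>set js. j = i}" using i by auto
  qed
  finally show ?thesis by (simp add: map_replicate_const prod_list_replicate)
qed


lemma adj_part:
  fixes x :: "nat \<Rightarrow> complex"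
  shows "(\<Sum>js\<in>{js. length js = m \<and> set js \<subseteq> {1..n}}. adjacency_tensor k E (i # js) * prod_list (map x js))
         = (1 / of_nat (fact (k - 1))) * (\<Sum>js\<in>{js. length js = m \<and> set js \<subseteq> {1..n} \<and> set (i # js) \<in> E}. prod_list (map x js))"
proof -
  let ?L = "{js. length js = m \<and> set js \<subseteq> {1..n}}"
  have fin: "finite ?L" using finite_lists_length_eq[of "{1..n}" m] by (simp add: conj_commute)
  have "(\<Sum>js\<in>?L. adjacency_tensor k E (i # js) * prod_list (map x js))
      = (\<Sum>js\<in>?L. if set (i # js) \<in> E then (1 / of_nat (fact (k - 1))) * prod_list (map x js) else 0)"
    by (rule sum.cong) (auto simp: adjacency_tensor_def)
  also have "\<dots> = (\<Sum>js\<in>{js\<in>?L. set (i # js) \<in> E}. (1 / of_nat (fact (k - 1))) * prod_list (map x js))"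
    by (rule sum.inter_filter[OF fin, symmetric])
  also have "{js\<in>?L. set (i # js) \<in> E} = {js. length js = m \<and> set js \<subseteq> {1..n} \<and> set (i # js) \<in> E}"
    by auto
  finally show ?thesis by (simp add: sum_distrib_left)
qed

lemma A_eq:
  assumes U: "uniform_hypergraph n k E" and k: "k \<ge> 1"
  shows "{js. length js = k - 1 \<and> set js \<subseteq> {1..n} \<and> set (i # js) \<in> E}
       = (\<Union>e\<in>{e\<in>E. i \<in> e}. permutations_of_set (e - {i}))"
proof
  show "{js. length js = k - 1 \<and> set js \<subseteq> {1..n} \<and> set (i # js) \<in> E}
       \<subseteq> (\<Union>e\<in>{e\<in>E. i \<in> e}. permutations_of_set (e - {i}))"
  proof
    fix js assume "js \<in> {js. length js = k - 1 \<and> set js \<subseteq> {1..n} \<and> set (i # js) \<in> E}"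
    then have l: "length js = k - 1" and e: "set (i # js) \<in> E" by auto
    have "card (set (i # js)) = k" using U e unfolding uniform_hypergraph_def by blast
    then have "card (set (i # js)) = length (i # js)" using l k by simp
    then have d: "distinct (i # js)" by (rule card_distinct)
    then have "js \<in> permutations_of_set (set (i # js) - {i})"
      by (auto simp: permutations_of_set_def)
    then show "js \<in> (\<Union>e\<in>{e\<in>E. i \<in> e}. permutations_of_set (e - {i}))" using e by auto
  qed
next
  show "(\<Union>e\<in>{e\<in>E. i \<in> e}. permutations_of_set (e - {i}))
      \<subseteq> {js. length js = k - 1 \<and> set js \<subseteq> {1..n} \<and> set (i # js) \<in> E}"
  proof
    fix js assume "js \<in> (\<Union>e\<in>{e\<in>E. i \<in> e}. permutations_of_set (e - {i}))"
    then obtain e where e: "e \<in> E" "i \<in> e" and p: "js \<in> permutations_of_set (e - {i})" by auto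
    have ce: "card e = k" "e \<subseteq> {1..n}" using U e unfolding uniform_hypergraph_def by auto
    then have fe: "finite e" using finite_subset by blast
    have "length js = card (e - {i})" by (rule length_finite_permutations_of_set[OF p])
    also have "\<dots> = k - 1" using ce fe e by simp
    finally have "length js = k - 1" .
    moreover have "set js = e - {i}" using p by (simp add: permutations_of_set_def)
    moreover then have "set (i # js) = e" using e by auto
    ultimately show "js \<in> {js. length js = k - 1 \<and> set js \<subseteq> {1..n} \<and> set (i # js) \<in> E}"
      using ce e by auto
  qed
qed

lemma card_A:
  assumes U: "uniform_hypergraph n k E" and k: "k \<ge> 1"
  shows "card {js. length js = k - 1 \<and> set js \<subseteq> {1..n} \<and> set (i # js) \<in> E} = hdegree E i * fact (k - 1)"
proof -
  have finE: "finite E"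
  proof (rule finite_subset)
    show "E \<subseteq> Pow {1..n}" using U unfolding uniform_hypergraph_def by auto
  qed simp
  have ce: "\<And>e. e \<in> E \<Longrightarrow> card e = k \<and> finite e"
    using U unfolding uniform_hypergraph_def by (meson finite_atLeastAtMost finite_subset)
  have "card (\<Union>e\<in>{e\<in>E. i \<in> e}. permutations_of_set (e - {i}))
       = (\<Sum>e\<in>{e\<in>E. i \<in> e}. card (permutations_of_set (e - {i})))"
  proof (rule card_UN_disjoint)
    show "finite {e\<in>E. i \<in> e}" using finE by simp
    show "\<forall>e\<in>{e\<in>E. i \<in> e}. finite (permutations_of_set (e - {i}))" by simp
    show "\<forall>e\<in>{e\<in>E. i \<in> e}. \<forall>f\<in>{e\<in>E. i \<in> e}. e \<noteq> f \<longrightarrow>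
        permutations_of_set (e - {i}) \<inter> permutations_of_set (f - {i}) = {}"
    proof (intro ballI impI)
      fix e f assume "e \<in> {e\<in>E. i \<in> e}" "f \<in> {e\<in>E. i \<in> e}" "e \<noteq> f"
      then have "e - {i} \<noteq> f - {i}" by (metis insert_Diff mem_Collect_eq)
      then show "permutations_of_set (e - {i}) \<inter> permutations_of_set (f - {i}) = {}"
        by (auto simp: permutations_of_set_def)
    qed
  qed
  also have "\<dots> = (\<Sum>e\<in>{e\<in>E. i \<in> e}. fact (k - 1))"
    by (rule sum.cong) (use ce in auto)
  also have "\<dots> = hdegree E i * fact (k - 1)" by (simp add: hdegree_def)
  finally show ?thesis using A_eq[OF U k, of i] by simp
qed


theorem proposition4p1:
  fixes n k :: nat and E :: "nat set set"
  assumes "odd k" and "k \<ge> 3"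
    and "uniform_hypergraph n k E"
    and "hconnected n E"
    and "E \<noteq> {}"
  shows "\<not> tensor_eigenvalue n k (signless_laplacian k E) 0"
proof
  assume "tensor_eigenvalue n k (signless_laplacian k E) 0"
  then obtain x :: "nat \<Rightarrow> complex" where nz: "\<exists>i\<in>{1..n}. x i \<noteq> 0" and
    eq: "\<forall>i\<in>{1..n}. (\<Sum>js\<in>{js. length js = k - 1 \<and> set js \<subseteq> {1..n}}.
               signless_laplacian k E (i # js) * prod_list (map x js)) = 0 * x i ^ (k - 1)"
    unfolding tensor_eigenvalue_def by blast
  note U = \<open>uniform_hypergraph n k E\<close>
  have k1: "k \<ge> 1" using \<open>k \<ge> 3\<close> by simp
  define A where "A i = {js. length js = k - 1 \<and> set js \<subseteq> {1..n} \<and> set (i # js) \<in> E}" for i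
  have finA: "finite (A i)" for i
  proof (rule finite_subset)
    show "A i \<subseteq> {js. set js \<subseteq> {1..n} \<and> length js = k - 1}" unfolding A_def by auto
  qed (rule finite_lists_length_eq, simp)
  have sumA: "(\<Sum>js\<in>A i. prod_list (map x js)) = - of_nat (card (A i)) * x i ^ (k - 1)"
    if i: "i \<in> {1..n}" for i
  proof -
    have "0 = (\<Sum>js\<in>{js. length js = k - 1 \<and> set js \<subseteq> {1..n}}.
               signless_laplacian k E (i # js) * prod_list (map x js))" using eq i by simp
    also have "\<dots> = (\<Sum>js\<in>{js. length js = k - 1 \<and> set js \<subseteq> {1..n}}.
               degree_tensor E (i # js) * prod_list (map x js)) +
          (\<Sum>js\<in>{js. length js = k - 1 \<and> set js \<subseteq> {1..n}}.
               adjacency_tensor k E (i # js) * prod_list (map x js))"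
      by (simp add: signless_laplacian_def distrib_right sum.distrib)
    also have "\<dots> = of_nat (hdegree E i) * x i ^ (k - 1) +
        (1 / of_nat (fact (k - 1))) * (\<Sum>js\<in>A i. prod_list (map x js))"
      unfolding deg_part[OF i] adj_part A_def ..
    finally have h: "0 = of_nat (hdegree E i) * x i ^ (k - 1) +
        (1 / of_nat (fact (k - 1))) * (\<Sum>js\<in>A i. prod_list (map x js))" .
    have c: "card (A i) = hdegree E i * fact (k - 1)" unfolding A_def by (rule card_A[OF U k1])
    have f0: "(of_nat (fact (k - 1)) :: complex) \<noteq> 0" by simp
    from h have "(\<Sum>js\<in>A i. prod_list (map x js)) = - of_nat (fact (k - 1)) * (of_nat (hdegree E i) * x i ^ (k - 1))"
      using f0 by (simp add: field_simps) (metis add.commute add_eq_0_iff mult.commute)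
    then show ?thesis using c by (simp add: mult.commute mult.left_commute)
  qed
  have nk: "n \<ge> k" using U unfolding uniform_hypergraph_def by simp
  define M where "M = Max ((\<lambda>j. norm (x j)) ` {1..n})"
  have Mge: "norm (x j) \<le> M" if "j \<in> {1..n}" for j
    unfolding M_def using that by (intro Max_ge) auto
  have "M \<in> (\<lambda>j. norm (x j)) ` {1..n}" unfolding M_def
    using nk \<open>k \<ge> 3\<close> by (intro Max_in) auto
  then obtain i0 where i0: "i0 \<in> {1..n}" "norm (x i0) = M" by auto
  have Mpos: "M > 0"
  proof -
    obtain j where "j \<in> {1..n}" "x j \<noteq> 0" using nz by blast
    then show ?thesis using Mge[of j] by (smt (verit) zero_less_norm_iff)
  qed
  have good: "\<forall>js\<in>A j. prod_list (map x js) = - (x j ^ (k - 1)) \<and> (\<forall>l\<in>set js. norm (x l) = M)"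
    if j: "j \<in> {1..n}" "norm (x j) = M" for j
  proof (cases "A j = {}")
    case True then show ?thesis by simp
  next
    case False
    show ?thesis
    proof (rule key[OF finA False Mpos])
      show "\<forall>js\<in>A j. \<forall>l\<in>set js. norm (x l) \<le> M" using Mge unfolding A_def by auto
      show "\<forall>js\<in>A j. length js = k - 1" unfolding A_def by auto
      show "norm (x j ^ (k - 1)) = M ^ (k - 1)" using j by (simp add: norm_power)
      show "(\<Sum>js\<in>A j. prod_list (map x js)) = - of_nat (card (A j)) * x j ^ (k - 1)"
        using sumA[OF j(1)] .
    qed
  qed
  obtain j where j: "j \<in> {1..n}" "j \<noteq> i0"
  proof
    show "(if i0 = 1 then 2 else 1) \<in> {1..n}" using nk \<open>k \<ge> 3\<close> by auto
    show "(if i0 = 1 then 2 else 1) \<noteq> i0" by auto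
  qed
  have ij: "i0 \<noteq> j" using j(2) by simp
  note hc = \<open>hconnected n E\<close>[unfolded hconnected_def, rule_format, OF i0(1) j(1) ij]
  from hc obtain es where es: "es \<noteq> []" "set es \<subseteq> E" "i0 \<in> hd es"
    by (elim exE conjE) simp
  define e where "e = hd es"
  have eE: "e \<in> E" "i0 \<in> e" using es unfolding e_def by auto
  have ce: "card e = k" "e \<subseteq> {1..n}" using U eE unfolding uniform_hypergraph_def by auto
  have fe: "finite e" using ce(2) finite_subset by blast
  have inA: "js \<in> A l" if "l \<in> e" "set js = e - {l}" "distinct js" for l js
  proof -
    have "length js = card (e - {l})" using that distinct_card by metis
    also have "\<dots> = k - 1" using ce fe that(1) by simp
    finally have "length js = k - 1" .
    moreover have "set (l # js) = e" using that by auto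
    ultimately show ?thesis unfolding A_def using that ce eE by auto
  qed
  have allM: "\<forall>l\<in>e. norm (x l) = M"
  proof
    fix l assume l: "l \<in> e"
    obtain js0 where js0: "set js0 = e - {i0}" "distinct js0"
      using finite_distinct_list[of "e - {i0}"] fe by auto
    have "js0 \<in> A i0" using inA[OF eE(2) js0] .
    then have "\<forall>l\<in>set js0. norm (x l) = M" using good[OF i0] by blast
    then show "norm (x l) = M" using l js0 i0 by (cases "l = i0") auto
  qed
  define P where "P = prod x e"
  have rel: "x l ^ k = - P" if l: "l \<in> e" for l
  proof -
    obtain jl where jl: "set jl = e - {l}" "distinct jl"
      using finite_distinct_list[of "e - {l}"] fe by auto
    have lM: "l \<in> {1..n}" "norm (x l) = M" using l ce allM by auto
    have "prod_list (map x jl) = - (x l ^ (k - 1))" using good[OF lM] inA[OF l jl] by blast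
    moreover have "prod_list (map x jl) = prod x (e - {l})"
      using prod.distinct_set_conv_list[OF jl(2), of x] jl(1) by simp
    moreover have "P = x l * prod x (e - {l})" unfolding P_def using prod.remove[OF fe l] .
    ultimately have "P = - (x l * x l ^ (k - 1))" by simp
    also have "x l * x l ^ (k - 1) = x l ^ k" using k1 by (metis Suc_diff_1 less_le_trans power_Suc zero_less_one)
    finally show ?thesis by simp
  qed
  have "P ^ k = prod (\<lambda>l. x l ^ k) e" unfolding P_def by (rule prod_power_distrib)
  also have "\<dots> = prod (\<lambda>l. - P) e" using rel by simp
  also have "\<dots> = (- P) ^ k" using ce by simp
  also have "\<dots> = - (P ^ k)" using \<open>odd k\<close> by (simp add: power_minus_odd)
  finally have "P ^ k = 0" by simp
  then have "P = 0" by simp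
  moreover have "norm P = M ^ k"
  proof -
    have "norm P = prod (\<lambda>l. norm (x l)) e" unfolding P_def by (rule prod_norm[symmetric])
    also have "\<dots> = prod (\<lambda>l. M) e" using allM by simp
    finally show ?thesis using ce by simp
  qed
  ultimately show False using Mpos by simp
qed

end
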